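(* Let $\alpha\in(0,1)$, $\gamma,\beta>0$, $\lambda=\beta+\gamma$, $r_0>0$, $Y=B(0,r_0)\subset\mathbb R\oplus\mathbb R^{d-1}$, and $\mathcal X(x)=\|x\|^\alpha Ax$ with $A=\gamma\,\mathrm{Id}_{\mathbb R}\oplus(-\beta\,\mathrm{Id}_{\mathbb R^{d-1}})$, with flow $\varphi_t$. Let $x(t)$ be a trajectory in $Y$ for $t\in[0,T_0]$ and $\theta(t)$ its angle with $\mathbb R\times\{0\}$. Let $v(t)=D\varphi_t(x(0))v(0)$ be a flow-invariant family of tangent vectors along $x$, write $v=v_u+v_s$ with $v_u\in\mathbb R\times\{0\}$, $v_s\in\{0\}\times\mathbb R^{d-1}$, and let $\rho(t)$ be the angle between $v(t)$ and $\mathbb R\times\{0\}$, $\tan\rho=\|v_s\|/\|v_u\|$. Then for $t\in[0,T_0]$, if $\tan\rho(t)\le1$, $$(\tan\rho)'\le-\lambda\|x\|^\alpha\tan\rho+\alpha\lambda\|x\|^\alpha\frac{\tan\theta}{1+\tan^2\theta}.$$ *)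

theory Defs
  imports "HOL-Analysis.Analysis"
begin

text \<open>Ambient space: R (+) R^(d-1), rendered as real \<times> (real^'n) (Euclidean product norm).
  First component: unstable direction; second component: stable directions.\<close>

definition Aop :: "real \<Rightarrow> real \<Rightarrow> real \<times> (real^'n) \<Rightarrow> real \<times> (real^'n)" where
  "Aop \<gamma> \<beta> p = (\<gamma> * fst p, - (\<beta> *\<^sub>R snd p))"

definition Xfield :: "real \<Rightarrow> real \<Rightarrow> real \<Rightarrow> real \<times> (real^'n) \<Rightarrow> real \<times> (real^'n)" where
  "Xfield \<alpha> \<gamma> \<beta> p = (norm p powr \<alpha>) *\<^sub>R Aop \<gamma> \<beta> p"

definition tan_ang :: "real \<times> (real^'n) \<Rightarrow> real" where
  "tan_ang p = norm (snd p) / norm (fst p)"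

end

theory Submission
  imports Defs
begin


definition DXf :: "real \<Rightarrow> real \<Rightarrow> real \<Rightarrow> real \<times> (real^'n) \<Rightarrow> real \<times> (real^'n) \<Rightarrow> real \<times> (real^'n)" where
  "DXf \<alpha> \<gamma> \<beta> p w = (norm p powr \<alpha>) *\<^sub>R Aop \<gamma> \<beta> w
      + (\<alpha> * norm p powr \<alpha> / (norm p)\<^sup>2 * (p \<bullet> w)) *\<^sub>R Aop \<gamma> \<beta> p"

lemma Aop_lin: "bounded_linear (Aop \<gamma> \<beta>)"
  unfolding Aop_def
  by (intro bounded_linear_Pair bounded_linear_minus
        bounded_linear_compose[OF bounded_linear_mult_right bounded_linear_fst]
        bounded_linear_compose[OF bounded_linear_scaleR_right bounded_linear_snd])

lemma norm_powr_deriv: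
  assumes "p \<noteq> (0::real \<times> (real^'n))"
  shows "((\<lambda>q. norm q powr \<alpha>) has_derivative (\<lambda>w. \<alpha> * norm p powr \<alpha> / (norm p)\<^sup>2 * (p \<bullet> w))) (at p)"
proof -
  have n: "norm p > 0" using assms by simp
  have 1: "((\<lambda>q. norm q) has_derivative (\<lambda>w. sgn p \<bullet> w)) (at p)"
    using has_derivative_norm[OF assms] by (simp add: inner_commute)
  have 2: "((\<lambda>z. z powr \<alpha>) has_derivative (\<lambda>h. (\<alpha> * norm p powr (\<alpha> - 1)) * h)) (at (norm p))"
    using has_real_derivative_powr[OF n, of \<alpha>] by (simp add: has_field_derivative_def)
  have "((\<lambda>q. norm q powr \<alpha>) has_derivative (\<lambda>w. (\<alpha> * norm p powr (\<alpha> - 1)) * (sgn p \<bullet> w))) (at p)"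
    using has_derivative_compose[OF 1 2] by simp
  then show ?thesis
  proof (rule has_derivative_eq_rhs)
    show "(\<lambda>w. (\<alpha> * norm p powr (\<alpha> - 1)) * (sgn p \<bullet> w)) = (\<lambda>w. \<alpha> * norm p powr \<alpha> / (norm p)\<^sup>2 * (p \<bullet> w))"
      using n by (auto simp: fun_eq_iff sgn_div_norm powr_diff power2_eq_square field_simps)
  qed
qed

lemma DX:
  fixes p :: "real \<times> (real^'n)"
  assumes "0 < \<alpha>"
  shows "(Xfield \<alpha> \<gamma> \<beta> has_derivative DXf \<alpha> \<gamma> \<beta> p) (at p)"
proof (cases "p = 0")
  case False
  have A: "(Aop \<gamma> \<beta> has_derivative Aop \<gamma> \<beta>) (at p)"
    using Aop_lin bounded_linear_imp_has_derivative by blast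
  show ?thesis
    unfolding Xfield_def[abs_def] DXf_def[abs_def]
    using has_derivative_scaleR[OF norm_powr_deriv[OF False] A] by simp
next
  case True
  have "DXf \<alpha> \<gamma> \<beta> p = (\<lambda>w. 0)" using True assms by (simp add: DXf_def fun_eq_iff)
  moreover have "(Xfield \<alpha> \<gamma> \<beta> has_derivative (\<lambda>w. 0)) (at (0::real\<times>(real^'n)))"
  proof -
    obtain K where K: "K > 0" "\<And>w::real \<times> (real^'n). norm (Aop \<gamma> \<beta> w) \<le> norm w * K"
      using bounded_linear.pos_bounded[OF Aop_lin] by blast
    have ev: "\<forall>\<^sub>F h in at (0::real\<times>(real^'n)). norm ((1 / norm h) *\<^sub>R Xfield \<alpha> \<gamma> \<beta> h) \<le> norm h powr \<alpha> * K"
    proof (rule always_eventually, rule allI)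
      fix h :: "real \<times> (real^'n)"
      show "norm ((1 / norm h) *\<^sub>R Xfield \<alpha> \<gamma> \<beta> h) \<le> norm h powr \<alpha> * K"
      proof (cases "h = 0")
        case True then show ?thesis by (simp add: Xfield_def)
      next
        case False
        then have "norm h > 0" by simp
        have "norm ((1 / norm h) *\<^sub>R Xfield \<alpha> \<gamma> \<beta> h) = norm h powr \<alpha> * norm (Aop \<gamma> \<beta> h) / norm h"
          by (simp add: Xfield_def)
        also have "\<dots> \<le> norm h powr \<alpha> * (norm h * K) / norm h"
          by (intro divide_right_mono mult_left_mono) (auto simp: K(2))
        also have "\<dots> = norm h powr \<alpha> * K" using \<open>norm h > 0\<close> by simp
        finally show ?thesis .
      qed
    qed
    have lim: "((\<lambda>h. norm h powr \<alpha> * K) \<longlongrightarrow> norm (0::real\<times>(real^'n)) powr \<alpha> * K) (at 0)"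
      using assms by (intro tendsto_intros) (auto intro: tendsto_norm_zero[OF tendsto_ident_at, simplified])
    have nl: "((\<lambda>h. norm ((1 / norm h) *\<^sub>R (Xfield \<alpha> \<gamma> \<beta> h))) \<longlongrightarrow> 0) (at (0::real\<times>(real^'n)))"
      by (rule tendsto_sandwich[OF _ ev tendsto_const]) (use lim assms in auto)
    moreover have "Xfield \<alpha> \<gamma> \<beta> (0::real\<times>(real^'n)) = 0" by (simp add: Xfield_def)
    ultimately show ?thesis
      unfolding has_derivative_at by (simp add: bounded_linear_zero divide_inverse mult.commute)
  qed
  ultimately show ?thesis using True by simp
qed



lemma tan_ang_x:
  fixes p :: "real \<times> (real^'n)"
  shows "tan_ang p / (1 + (tan_ang p)\<^sup>2) = \<bar>fst p\<bar> * norm (snd p) / (norm p)\<^sup>2"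
proof (cases "fst p = 0")
  case True then show ?thesis by (simp add: tan_ang_def)
next
  case False
  have n: "(norm p)\<^sup>2 = (fst p)\<^sup>2 + (norm (snd p))\<^sup>2" by (simp add: norm_prod_def)
  show ?thesis unfolding tan_ang_def n using False
    by (cases "fst p > 0") (auto simp: field_simps power2_eq_square)
qed

lemma key_core:
  fixes a e \<tau> B \<beta> \<gamma> :: real
  assumes "0 < \<tau>" "\<tau> \<le> 1" "\<bar>e\<bar> \<le> B" "\<beta> > 0" "\<gamma> > 0"
  shows "- ((a + \<tau>*e) * (\<beta>*e + \<gamma>*\<tau>*a)) \<le> (\<beta>+\<gamma>) * (\<bar>a\<bar>*B)"
proof -
  have ex: "(a + \<tau>*e) * (\<beta>*e + \<gamma>*\<tau>*a) = a*e*(\<beta> + \<gamma>*\<tau>^2) + \<gamma>*\<tau>*a^2 + \<beta>*\<tau>*e^2"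
    by (simp add: algebra_simps power2_eq_square)
  have 1: "\<gamma>*\<tau>*a^2 \<ge> 0" "\<beta>*\<tau>*e^2 \<ge> 0" using assms by auto
  have t2: "\<tau>^2 \<le> 1" using assms by (simp add: power_le_one)
  have 2: "- (a*e) \<le> \<bar>a\<bar>*B"
  proof -
    have "- (a*e) \<le> \<bar>a\<bar>*\<bar>e\<bar>" by (simp add: abs_mult[symmetric])
    also have "\<dots> \<le> \<bar>a\<bar>*B" using assms by (simp add: mult_left_mono)
    finally show ?thesis .
  qed
  have 3: "- (a*e*(\<beta> + \<gamma>*\<tau>^2)) \<le> (\<bar>a\<bar>*B) * (\<beta>+\<gamma>)"
  proof -
    have B: "\<bar>a\<bar>*B \<ge> 0" using assms by simp
    have "- (a*e*(\<beta> + \<gamma>*\<tau>^2)) = (-(a*e))*(\<beta> + \<gamma>*\<tau>^2)" by simp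
    also have "\<dots> \<le> (\<bar>a\<bar>*B)*(\<beta> + \<gamma>*\<tau>^2)"
      using 2 assms by (intro mult_right_mono) auto
    also have "\<dots> \<le> (\<bar>a\<bar>*B)*(\<beta> + \<gamma>)"
      using B t2 assms by (intro mult_left_mono) auto
    finally show ?thesis .
  qed
  show ?thesis unfolding ex using 1 3 by (simp add: algebra_simps)
qed

lemma key:
  fixes a u c \<sigma> B \<beta> \<gamma> K P :: real
  assumes u: "u \<noteq> 0" and s: "\<sigma> > 0" "\<sigma> \<le> \<bar>u\<bar>" and c: "\<bar>c\<bar> \<le> \<sigma>*B"
    and "\<beta>>0" "\<gamma>>0" "K \<ge> 0"
  shows "((-(P*\<beta>)*\<sigma>^2 - K*(a*u+c)*\<beta>*c)/\<sigma> * \<bar>u\<bar> - \<sigma>*((P*\<gamma>*u + K*(a*u+c)*\<gamma>*a) * sgn u))/(\<bar>u\<bar>*\<bar>u\<bar>)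
         \<le> -(\<beta>+\<gamma>)*P*(\<sigma>/\<bar>u\<bar>) + K*((\<beta>+\<gamma>)*(\<bar>a\<bar>*B))"
proof -
  define \<tau> where "\<tau> = \<sigma>/\<bar>u\<bar>"
  define e where "e = c/\<sigma> * sgn u"
  have up: "\<bar>u\<bar> > 0" using u by simp
  have \<tau>: "0 < \<tau>" "\<tau> \<le> 1" using s up by (auto simp: \<tau>_def)
  have ea: "\<bar>e\<bar> = \<bar>c\<bar>/\<sigma>" using s u by (cases "u > 0") (auto simp: e_def)
  have e: "\<bar>e\<bar> \<le> B" unfolding ea using c s by (simp add: divide_le_eq mult.commute)
  have sig: "\<sigma> = \<tau>*\<bar>u\<bar>" using up by (simp add: \<tau>_def)
  have cc: "c = e*\<tau>*u" using up s u
    by (cases "u > 0") (auto simp: e_def \<tau>_def field_simps)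
  have eq: "((-(P*\<beta>)*\<sigma>^2 - K*(a*u+c)*\<beta>*c)/\<sigma> * \<bar>u\<bar> - \<sigma>*((P*\<gamma>*u + K*(a*u+c)*\<gamma>*a) * sgn u))/(\<bar>u\<bar>*\<bar>u\<bar>)
     = -(\<beta>+\<gamma>)*P*\<tau> - K*((a + \<tau>*e) * (\<beta>*e + \<gamma>*\<tau>*a))"
    unfolding cc sig using u \<tau>
    by (cases "u > 0") (auto simp: field_simps power2_eq_square)
  have "- K*((a + \<tau>*e) * (\<beta>*e + \<gamma>*\<tau>*a)) \<le> K*((\<beta>+\<gamma>) * (\<bar>a\<bar>*B))"
    using key_core[OF \<tau> e assms(5,6), of a] assms(7)
    by (metis minus_mult_left minus_mult_right mult_left_mono)
  then show ?thesis unfolding eq by (simp add: \<tau>_def)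
qed



theorem lemma7p7:
  fixes \<alpha> \<gamma> \<beta> r0 T0 t D :: real
    and x v :: "real \<Rightarrow> real \<times> (real^'n)"
  assumes "0 < \<alpha>" "\<alpha> < 1" "0 < \<gamma>" "0 < \<beta>" "0 < r0" "0 < T0"
    and traj: "\<And>s. s \<in> {0..T0} \<Longrightarrow>
        (x has_vector_derivative Xfield \<alpha> \<gamma> \<beta> (x s)) (at s within {0..T0})"
    and inY: "\<And>s. s \<in> {0..T0} \<Longrightarrow> x s \<in> ball 0 r0"
    and var: "\<And>s. s \<in> {0..T0} \<Longrightarrow>
        (v has_vector_derivative frechet_derivative (Xfield \<alpha> \<gamma> \<beta>) (at (x s)) (v s))
          (at s within {0..T0})"
    and t: "t \<in> {0..T0}"
    and vu: "fst (v t) \<noteq> 0"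
    and tanle: "tan_ang (v t) \<le> 1"
    and deriv: "((\<lambda>s. tan_ang (v s)) has_real_derivative D) (at t within {0..T0})"
  shows "D \<le> - (\<beta> + \<gamma>) * norm (x t) powr \<alpha> * tan_ang (v t)
              + \<alpha> * (\<beta> + \<gamma>) * norm (x t) powr \<alpha>
                  * (tan_ang (x t) / (1 + (tan_ang (x t))\<^sup>2))"
proof -
  let ?I = "{0..T0}"
  define v' where "v' = DXf \<alpha> \<gamma> \<beta> (x t) (v t)"
  have fd: "frechet_derivative (Xfield \<alpha> \<gamma> \<beta>) (at (x t)) = DXf \<alpha> \<gamma> \<beta> (x t)"
    using frechet_derivative_at[OF DX[OF \<open>0 < \<alpha>\<close>, where p="x t" and \<gamma>=\<gamma> and \<beta>=\<beta>]] by simp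
  have hv: "(v has_vector_derivative v') (at t within ?I)"
    using var[OF t] unfolding fd v'_def .
  define a where "a = fst (x t)"
  define b where "b = snd (x t)"
  define u where "u = fst (v t)"
  define S where "S = snd (v t)"
  define P where "P = norm (x t) powr \<alpha>"
  define K where "K = \<alpha> * P / (norm (x t))\<^sup>2"
  define m where "m = a*u + S \<bullet> b"
  have xv: "x t \<bullet> v t = m"
    by (simp add: m_def a_def b_def u_def S_def inner_prod_def inner_commute)
  have fv': "fst v' = P*\<gamma>*u + K*m*\<gamma>*a"
    unfolding v'_def DXf_def Aop_def xv[symmetric]
    by (simp add: K_def P_def a_def u_def)
  have sv': "snd v' = - ((P*\<beta>) *\<^sub>R S) - (K*m*\<beta>) *\<^sub>R b"
    unfolding v'_def DXf_def Aop_def xv[symmetric]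
    by (simp add: K_def P_def b_def S_def)
  have hfst: "((\<lambda>s. fst (v s)) has_real_derivative fst v') (at t within ?I)"
    using has_derivative_fst[OF hv[unfolded has_vector_derivative_def]]
    unfolding has_real_derivative_iff_has_vector_derivative has_vector_derivative_def by simp
  have hsnd: "((\<lambda>s. snd (v s)) has_vector_derivative snd v') (at t within ?I)"
    using has_derivative_snd[OF hv[unfolded has_vector_derivative_def]]
    unfolding has_vector_derivative_def by simp
  have Kpos: "K \<ge> 0" using \<open>0 < \<alpha>\<close> by (simp add: K_def P_def)
  have tx: "tan_ang (x t) / (1 + (tan_ang (x t))\<^sup>2) = \<bar>a\<bar> * norm b / (norm (x t))\<^sup>2"
    using tan_ang_x[of "x t"] by (simp add: a_def b_def)
  have rhs2: "\<alpha> * (\<beta> + \<gamma>) * P * (\<bar>a\<bar> * norm b / (norm (x t))\<^sup>2) = K*((\<beta>+\<gamma>)*(\<bar>a\<bar>*norm b))"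
    by (simp add: K_def)
  have tv: "tan_ang (v t) = norm S / \<bar>u\<bar>" by (simp add: tan_ang_def S_def u_def)
  have u0: "u \<noteq> 0" using vu by (simp add: u_def)
  show ?thesis
    unfolding tx P_def[symmetric] rhs2
  proof (cases "S = 0")
    case False
    have sp: "norm S > 0" using False by simp
    have dS: "((\<lambda>s. norm (snd (v s))) has_real_derivative (snd v' \<bullet> sgn S)) (at t within ?I)"
    proof -
      have "((\<lambda>s. norm (snd (v s))) has_derivative (\<lambda>h. (h *\<^sub>R snd v') \<bullet> sgn S)) (at t within ?I)"
        using has_derivative_compose[OF hsnd[unfolded has_vector_derivative_def] has_derivative_norm[of "snd (v t)"]] False
        by (simp add: S_def)
      then show ?thesis unfolding has_field_derivative_def
        by (rule has_derivative_eq_rhs) (simp add: fun_eq_iff)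
    qed
    have du: "((\<lambda>s. norm (fst (v s))) has_real_derivative (fst v' * sgn u)) (at t within ?I)"
    proof -
      have h1: "((\<lambda>s. fst (v s)) has_derivative (\<lambda>h. h * fst v')) (at t within ?I)"
        using hfst unfolding has_field_derivative_def
        by (rule has_derivative_eq_rhs) (simp add: fun_eq_iff mult.commute)
      have "((\<lambda>s. norm (fst (v s))) has_derivative (\<lambda>h. (h * fst v') \<bullet> sgn u)) (at t within ?I)"
        using has_derivative_compose[OF h1 has_derivative_norm[of "fst (v t)"]] u0
        by (simp add: u_def)
      then show ?thesis unfolding has_field_derivative_def
        by (rule has_derivative_eq_rhs) (simp add: fun_eq_iff)
    qed
    have dg: "((\<lambda>s. tan_ang (v s)) has_real_derivative
        ((snd v' \<bullet> sgn S) * \<bar>u\<bar> - norm S * (fst v' * sgn u)) / (\<bar>u\<bar> * \<bar>u\<bar>)) (at t within ?I)"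
      using DERIV_divide[OF dS du] u0 unfolding tan_ang_def[abs_def] by (simp add: S_def u_def)
    have DE: "D = ((snd v' \<bullet> sgn S) * \<bar>u\<bar> - norm S * (fst v' * sgn u)) / (\<bar>u\<bar> * \<bar>u\<bar>)"
    proof (rule vector_derivative_unique_within_closed_interval[OF \<open>0 < T0\<close>])
      show "t \<in> cbox 0 T0" using t by (simp add: box_real(2))
      show "((\<lambda>s. tan_ang (v s)) has_vector_derivative D) (at t within cbox 0 T0)"
        using deriv unfolding has_real_derivative_iff_has_vector_derivative box_real(2) .
      show "((\<lambda>s. tan_ang (v s)) has_vector_derivative ((snd v' \<bullet> sgn S) * \<bar>u\<bar> - norm S * (fst v' * sgn u)) / (\<bar>u\<bar> * \<bar>u\<bar>)) (at t within cbox 0 T0)"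
        using dg unfolding has_real_derivative_iff_has_vector_derivative box_real(2) .
    qed
    have sS: "snd v' \<bullet> sgn S = (-(P*\<beta>)*(norm S)^2 - K*m*\<beta>*(S \<bullet> b)) / norm S"
      unfolding sv' using sp
      by (simp add: sgn_div_norm inner_diff_left inner_diff_right inner_minus_right inner_commute power2_norm_eq_inner field_simps)
    have cs: "\<bar>S \<bullet> b\<bar> \<le> norm S * norm b" by (rule Cauchy_Schwarz_ineq2)
    have le: "norm S \<le> \<bar>u\<bar>" using tanle u0 unfolding tv by (simp add: divide_le_eq)
    have "D \<le> -(\<beta>+\<gamma>)*P*(norm S/\<bar>u\<bar>) + K*((\<beta>+\<gamma>)*(\<bar>a\<bar>*norm b))"
      unfolding DE sS fv' m_def
      using key[OF u0 sp le cs \<open>0<\<beta>\<close> \<open>0<\<gamma>\<close> Kpos, of P a] by (simp add: mult.assoc)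
    then show "D \<le> - (\<beta> + \<gamma>) * P * tan_ang (v t) + K * ((\<beta> + \<gamma>) * (\<bar>a\<bar> * norm b))"
      unfolding tv .
  next
    case True
    have tv0: "tan_ang (v t) = 0" unfolding tv True by simp
    have R0: "K * ((\<beta> + \<gamma>) * (\<bar>a\<bar> * norm b)) \<ge> 0" using Kpos \<open>0<\<beta>\<close> \<open>0<\<gamma>\<close> by simp
    have q: "((\<lambda>y. (tan_ang (v y) - tan_ang (v t)) / (y - t)) \<longlongrightarrow> D) (at t within ?I)"
      using deriv unfolding has_field_derivative_iff .
    show "D \<le> - (\<beta> + \<gamma>) * P * tan_ang (v t) + K * ((\<beta> + \<gamma>) * (\<bar>a\<bar> * norm b))"
    proof (cases "t = T0")
      case True
      have "at t within ?I = at_left t" using True \<open>0<T0\<close> by (simp add: at_within_Icc_at_left)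
      with q have ql: "((\<lambda>y. (tan_ang (v y) - tan_ang (v t)) / (y - t)) \<longlongrightarrow> D) (at_left t)" by simp
      have "D \<le> 0"
      proof (rule tendsto_upperbound[OF ql])
        show "\<forall>\<^sub>F y in at_left t. (tan_ang (v y) - tan_ang (v t)) / (y - t) \<le> 0"
          using eventually_at_left_real[where a=t and b="t - 1"]
        proof (rule eventually_mono)
          fix y :: real assume "y \<in> {t - 1<..<t}"
          moreover have "tan_ang (v y) \<ge> 0" by (simp add: tan_ang_def)
          ultimately show "(tan_ang (v y) - tan_ang (v t)) / (y - t) \<le> 0"
            unfolding tv0 by (intro divide_nonneg_neg) auto
        qed simp
      qed simp
      then show ?thesis using tv0 R0 by simp
    next
      case False
      then have tT: "t < T0" using t by simp
      have sub: "{t..T0} \<subseteq> ?I" using t by auto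
      have ar: "at t within {t..T0} = at_right t" using tT by (simp add: at_within_Icc_at_right)
      have qr: "((\<lambda>y. (tan_ang (v y) - tan_ang (v t)) / (y - t)) \<longlongrightarrow> D) (at_right t)"
        using tendsto_within_subset[OF q sub] unfolding ar .
      have hs2: "((\<lambda>s. snd (v s)) has_derivative (\<lambda>h. h *\<^sub>R snd v')) (at t within {t..T0})"
        using has_derivative_subset[OF hsnd[unfolded has_vector_derivative_def] sub] .
      have l0: "((\<lambda>y. (1 / norm (y - t)) *\<^sub>R (snd (v y) - (snd (v t) + (y - t) *\<^sub>R snd v'))) \<longlongrightarrow> 0) (at_right t)"
        using hs2 unfolding has_derivative_within ar by blast
      have l1: "((\<lambda>y. (1 / (y - t)) *\<^sub>R snd (v y)) \<longlongrightarrow> snd v') (at_right t)"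
      proof -
        have "((\<lambda>y. (1 / norm (y - t)) *\<^sub>R (snd (v y) - (snd (v t) + (y - t) *\<^sub>R snd v')) + snd v') \<longlongrightarrow> snd v') (at_right t)"
          using tendsto_add[OF l0 tendsto_const[of "snd v'"]] by simp
        then show ?thesis
        proof (rule Lim_transform_eventually)
          show "\<forall>\<^sub>F y in at_right t. (1 / norm (y - t)) *\<^sub>R (snd (v y) - (snd (v t) + (y - t) *\<^sub>R snd v')) + snd v' = (1 / (y - t)) *\<^sub>R snd (v y)"
            using eventually_at_right_less[of t]
            by (rule eventually_mono) (use True in \<open>simp add: S_def scaleR_diff_right\<close>)
        qed
      qed
      have cu: "((\<lambda>y. fst (v y)) \<longlongrightarrow> u) (at_right t)"
      proof -
        have "continuous (at t within {t..T0}) (\<lambda>y. fst (v y))"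
          using DERIV_continuous[OF DERIV_subset[OF hfst sub]] .
        then show ?thesis unfolding continuous_within ar u_def .
      qed
      have l2: "((\<lambda>y. norm ((1 / (y - t)) *\<^sub>R snd (v y)) / norm (fst (v y))) \<longlongrightarrow> norm (snd v') / norm u) (at_right t)"
        using u0 by (intro tendsto_divide tendsto_norm l1 cu) auto
      have l3: "((\<lambda>y. (tan_ang (v y) - tan_ang (v t)) / (y - t)) \<longlongrightarrow> norm (snd v') / norm u) (at_right t)"
      proof (rule Lim_transform_eventually[OF l2])
        show "\<forall>\<^sub>F y in at_right t. norm ((1 / (y - t)) *\<^sub>R snd (v y)) / norm (fst (v y)) = (tan_ang (v y) - tan_ang (v t)) / (y - t)"
          using eventually_at_right_less[of t]
          by (rule eventually_mono) (use True in \<open>simp add: S_def tan_ang_def\<close>)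
      qed
      have DD: "D = norm (snd v') / norm u"
        using tendsto_unique[OF trivial_limit_at_right_real qr l3] .
      have "norm (snd v') = K*\<bar>m\<bar>*\<beta>*norm b"
        unfolding sv' True using Kpos \<open>0<\<beta>\<close> by (simp add: abs_mult)
      moreover have "\<bar>m\<bar> = \<bar>a\<bar>*\<bar>u\<bar>" unfolding m_def True by (simp add: abs_mult)
      ultimately have "D = K*\<beta>*(\<bar>a\<bar>*norm b)" unfolding DD using u0 by simp
      also have "\<dots> \<le> K*((\<beta>+\<gamma>)*(\<bar>a\<bar>*norm b))"
        using Kpos \<open>0<\<gamma>\<close> by (simp add: algebra_simps mult_nonneg_nonneg)
      finally show ?thesis using tv0 by simp
    qed
  qed
qed

end
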